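(* Let $\mathbb{F}\in\{\mathbb{R},\mathbb{C}\}$, $A\in\mathbb{F}^{m\times n}$ with $\|A\|_{\infty,col}\le1$, $b\in\mathbb{F}^m$, $\mu>0$, and let $N\ge1$ be an integer with $\beta_N>0$. Let $x'$ be a stationary point of $\mathcal{K}_{reg}$, set $z'=(I-A^*A)x'+A^*b$, and assume $$|z'_i|\notin\Big[\beta_N^2\sqrt{\mu},\ \frac{\sqrt{\mu}}{\beta_N^2}\Big]\quad\text{for all }1\le i\le n.$$ If $2\mu\,\mathrm{card}(x')+\|Ax'-b\|_2^2<\mu N+\mu$, then $x'$ is the unique global minimizer of $\mathcal{K}$ and of $\mathcal{K}_{reg}$.
   Context: $\|A\|_{\infty,col}=\max_i\|a_i\|_2$ over the columns $a_i$ of $A$. $\mathrm{card}(x)$ is the number of nonzero entries; $\beta_k=\inf\{\|Ax\|_2/\|x\|_2:x\ne0,\ \mathrm{card}(x)\le k\}$. $\mathcal{K}(x)=\mu\,\mathrm{card}(x)+\|Ax-b\|_2^2$ and $\mathcal{K}_{reg}(x)=\mathcal{Q}_2(\mu\,\mathrm{card})(x)+\|Ax-b\|_2^2$ with $\mathcal{Q}_2(\mu\,\mathrm{card})(x)=\sum_{j=1}^n\big(\mu-(\max\{\sqrt{\mu}-|x_j|,0\})^2\big)$. $A^*$ is the conjugate transpose. A stationary point of a function $g$ is a point $x$ with $0$ in the Fréchet subdifferential $\hat\partial g(x)$, i.e. the set of $v$ with $\liminf_{y\to x,y\ne x}(g(y)-g(x)-\mathrm{Re}\langle v,y-x\rangle)/\|y-x\|\ge0$.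 *)

theory Defs
  imports "HOL-Analysis.Analysis"
begin

text \<open>Vectors in F^n are 'a ^ 'n, matrices in F^(m x n) are 'a ^ 'n ^ 'm,
  with 'a = real or 'a = complex.
  The real inner product Re<v,w> on F^n is the library inner on vec.\<close>

definition col_inf_norm :: "('a::real_normed_vector) ^ 'n ^ 'm \<Rightarrow> real" where
  "col_inf_norm A = Max (range (\<lambda>i. sqrt (\<Sum>r\<in>UNIV. (norm (A $ r $ i))\<^sup>2)))"

definition card_nz :: "('a::zero) ^ 'n \<Rightarrow> nat" where
  "card_nz x = card {i. x $ i \<noteq> 0}"

definition beta :: "('a::{real_normed_vector,semiring_1}) ^ 'n ^ 'm \<Rightarrow> nat \<Rightarrow> real" where
  "beta A k = Inf {norm (A *v x) / norm x | x. x \<noteq> 0 \<and> card_nz x \<le> k}"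

text \<open>Conjugate transpose, parametrised by the conjugation of the scalar field
  (identity for real, cnj for complex).\<close>
definition adjoint :: "('a \<Rightarrow> 'a) \<Rightarrow> ('a::semiring_1) ^ 'n ^ 'm \<Rightarrow> 'a ^ 'm ^ 'n" where
  "adjoint cj A = (\<chi> j i. cj (A $ i $ j))"

definition K_fun :: "real \<Rightarrow> ('a::{real_normed_vector,semiring_1}) ^ 'n ^ 'm \<Rightarrow> 'a ^ 'm \<Rightarrow> 'a ^ 'n \<Rightarrow> real" where
  "K_fun mu A b x = mu * real (card_nz x) + (norm (A *v x - b))\<^sup>2"

definition Q2_card :: "real \<Rightarrow> ('a::real_normed_vector) ^ 'n \<Rightarrow> real" where
  "Q2_card mu x = (\<Sum>j\<in>UNIV. mu - (max (sqrt mu - norm (x $ j)) 0)\<^sup>2)"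

definition K_reg :: "real \<Rightarrow> ('a::{real_normed_vector,semiring_1}) ^ 'n ^ 'm \<Rightarrow> 'a ^ 'm \<Rightarrow> 'a ^ 'n \<Rightarrow> real" where
  "K_reg mu A b x = Q2_card mu x + (norm (A *v x - b))\<^sup>2"

definition frechet_subdiff :: "('v::real_inner \<Rightarrow> real) \<Rightarrow> 'v \<Rightarrow> 'v set" where
  "frechet_subdiff g x = {v. Liminf (at x) (\<lambda>y. ereal ((g y - g x - inner v (y - x)) / norm (y - x))) \<ge> 0}"

definition stationary :: "('v::real_inner \<Rightarrow> real) \<Rightarrow> 'v \<Rightarrow> bool" where
  "stationary g x \<longleftrightarrow> 0 \<in> frechet_subdiff g x"

definition unique_global_min :: "('v \<Rightarrow> real) \<Rightarrow> 'v \<Rightarrow> bool" where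
  "unique_global_min g x \<longleftrightarrow> (\<forall>y. y \<noteq> x \<longrightarrow> g x < g y)"

end

theory Submission
  imports Defs
begin

definition qf :: "real \<Rightarrow> 'a::real_normed_vector \<Rightarrow> real" where
  "qf mu t = mu - (max (sqrt mu - norm t) 0)\<^sup>2"

definition gf :: "real \<Rightarrow> 'a::real_normed_vector \<Rightarrow> real" where
  "gf mu t = qf mu t + (norm t)\<^sup>2"

lemma phi_lower:
  fixes m r c :: real
  assumes "m > 0" "r \<ge> 0" "c \<ge> m"
  shows "m\<^sup>2 - (max (m - r) 0)\<^sup>2 + r\<^sup>2 \<ge> 2*c*r - c\<^sup>2 + m\<^sup>2"
proof (cases "r \<le> m")
  case True
  then have "max (m - r) 0 = m - r" by simp
  moreover have "(c - m) * (c + m - 2*r) \<ge> 0" using assms True by (intro mult_nonneg_nonneg) auto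
  ultimately show ?thesis by (simp add: power2_eq_square algebra_simps)
next
  case False
  then have "max (m - r) 0 = 0" by simp
  moreover have "(r - c)\<^sup>2 \<ge> 0" by simp
  ultimately show ?thesis by (simp add: power2_eq_square algebra_simps)
qed

lemma phi_eq:
  fixes m r :: real
  assumes "m > 0" "r \<ge> 0"
  shows "m\<^sup>2 - (max (m - r) 0)\<^sup>2 + r\<^sup>2 = 2*(max r m)*r - (max r m)\<^sup>2 + m\<^sup>2"
  by (cases "r \<le> m") (auto simp: power2_eq_square algebra_simps max_def)

lemma gf_norm:
  assumes "mu > 0"
  shows "gf mu t = (sqrt mu)\<^sup>2 - (max (sqrt mu - norm t) 0)\<^sup>2 + (norm t)\<^sup>2"
  using assms by (simp add: gf_def qf_def)

lemma gf_convex: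
  fixes x e :: "'a::real_normed_vector"
  assumes mu: "mu > 0" and s: "0 \<le> s" "s \<le> 1"
  shows "gf mu (x + s *\<^sub>R e) \<le> (1 - s) * gf mu x + s * gf mu (x + e)"
proof -
  define m where "m = sqrt mu"
  have m: "m > 0" using mu by (simp add: m_def)
  define n where "n = norm (x + s *\<^sub>R e)"
  define c where "c = max n m"
  have c: "c \<ge> m" "c \<ge> 0" using m by (auto simp: c_def)
  have "x + s *\<^sub>R e = (1 - s) *\<^sub>R x + s *\<^sub>R (x + e)" by (simp add: algebra_simps)
  then have "n \<le> norm ((1 - s) *\<^sub>R x) + norm (s *\<^sub>R (x + e))"
    unfolding n_def by (metis norm_triangle_ineq)
  also have "\<dots> = (1 - s) * norm x + s * norm (x + e)" using s by simp
  finally have nle: "n \<le> (1 - s) * norm x + s * norm (x + e)" .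
  have e1: "gf mu (x + s *\<^sub>R e) = 2*c*n - c\<^sup>2 + m\<^sup>2"
    unfolding gf_norm[OF mu] m_def[symmetric] n_def[symmetric] c_def using phi_eq[OF m, of n] n_def by simp
  have l1: "gf mu x \<ge> 2*c*norm x - c\<^sup>2 + m\<^sup>2"
    unfolding gf_norm[OF mu] m_def[symmetric] using phi_lower[OF m _ c(1)] by simp
  have l2: "gf mu (x + e) \<ge> 2*c*norm (x + e) - c\<^sup>2 + m\<^sup>2"
    unfolding gf_norm[OF mu] m_def[symmetric] using phi_lower[OF m _ c(1)] by simp
  have "2*c*n \<le> 2*c*((1 - s) * norm x + s * norm (x + e))"
    using nle c by (intro mult_left_mono) auto
  moreover have "(1 - s) * gf mu x \<ge> (1 - s) * (2*c*norm x - c\<^sup>2 + m\<^sup>2)"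
    using l1 s by (intro mult_left_mono) auto
  moreover have "s * gf mu (x + e) \<ge> s * (2*c*norm (x + e) - c\<^sup>2 + m\<^sup>2)"
    using l2 s by (intro mult_left_mono) auto
  ultimately show ?thesis unfolding e1 by (simp add: algebra_simps)
qed

lemma gf_small:
  assumes "mu > 0" "norm t \<le> sqrt mu"
  shows "gf mu t = 2 * sqrt mu * norm t"
  using assms by (simp add: gf_def qf_def power2_eq_square algebra_simps)

lemma gf_large:
  assumes "mu > 0" "norm t \<ge> sqrt mu"
  shows "gf mu t = mu + (norm t)\<^sup>2"
  using assms by (simp add: gf_def qf_def)

lemma gf_le:
  assumes "mu > 0"
  shows "gf mu t \<le> mu + (norm t)\<^sup>2"
  using assms by (simp add: gf_def qf_def)

lemma gf_ge:
  assumes "mu > 0"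
  shows "gf mu t \<ge> 2 * sqrt mu * norm t"
proof (cases "norm t \<le> sqrt mu")
  case True then show ?thesis using gf_small[OF assms True] by simp
next
  case False
  have "(norm t - sqrt mu)\<^sup>2 \<ge> 0" by simp
  have "gf mu t = mu + (norm t)\<^sup>2" using gf_large[OF assms, of t] False by simp
  moreover have "sqrt mu * sqrt mu = mu" using assms by simp
  ultimately show ?thesis using \<open>(norm t - sqrt mu)\<^sup>2 \<ge> 0\<close>
    by (simp add: power2_eq_square algebra_simps)
qed

lemma sub_consequence:
  fixes x z :: "'a::real_inner"
  assumes mu: "mu > 0" and b: "0 < bt" "bt \<le> 1"
    and sg: "\<And>e. gf mu (x + e) \<ge> gf mu x + 2 * inner z e"
    and nz: "norm z \<notin> {bt\<^sup>2 * sqrt mu .. sqrt mu / bt\<^sup>2}"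
  shows "(x = 0 \<and> norm z < bt\<^sup>2 * sqrt mu) \<or> (z = x \<and> norm x > sqrt mu / bt\<^sup>2)"
proof -
  define m where "m = sqrt mu"
  have m: "m > 0" using mu by (simp add: m_def)
  have mm: "m * m = mu" using mu by (simp add: m_def)
  have b2: "bt\<^sup>2 \<le> 1" "bt\<^sup>2 > 0" using b by (auto simp: power_le_one)
  have i1: "bt\<^sup>2 * m \<le> m" using b2 m by simp
  have i2: "m \<le> m / bt\<^sup>2" using b2 m by (simp add: le_divide_eq)
  have nz': "norm z < bt\<^sup>2 * m \<or> norm z > m / bt\<^sup>2" using nz unfolding m_def by auto
  show ?thesis
  proof (cases "x = 0")
    case True
    have "norm z \<le> m"
    proof (rule ccontr)
      assume "\<not> norm z \<le> m"
      then have zp: "norm z > m" by simp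
      define e where "e = (m / norm z) *\<^sub>R z"
      have z0: "z \<noteq> 0" using zp m by auto
      have ne: "norm e = m" using zp m z0 by (simp add: e_def)
      have "gf mu e = 2 * m * m" using gf_small[OF mu, of e] ne by (simp add: m_def)
      moreover have "inner z e = m * norm z"
        using zp m z0 by (simp add: e_def power2_norm_eq_inner[symmetric] power2_eq_square)
      moreover have "gf mu (0::'a) = 0" using gf_small[OF mu, of "0::'a"] mu by simp
      ultimately have "2 * m * m \<ge> 2 * (m * norm z)" using sg[of e] True by simp
      then have "m \<ge> norm z" using m by simp
      then show False using zp by simp
    qed
    then show ?thesis using True nz' i2 by (auto simp: m_def)
  next
    case False
    show ?thesis
    proof (cases "norm x < m")
      case True
      have xp: "norm x > 0" using False by simp
      have "gf mu (0::'a) = 0" using gf_small[OF mu, of "0::'a"] mu by simp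
      moreover have "gf mu x = 2 * m * norm x" using gf_small[OF mu, of x] True by (simp add: m_def)
      ultimately have "0 \<ge> 2 * m * norm x - 2 * inner z x" using sg[of "-x"] by simp
      moreover have "inner z x \<le> norm z * norm x" by (rule norm_cauchy_schwarz)
      ultimately have "m * norm x \<le> norm z * norm x" by simp
      then have zge: "norm z \<ge> m" using xp by simp
      then have zp: "norm z > 0" using m by linarith
      then have z0: "z \<noteq> 0" by auto
      define t where "t = m - norm x"
      have t: "t > 0" using True by (simp add: t_def)
      define e where "e = (t / norm z) *\<^sub>R z"
      have ne: "norm e = t" using zp t z0 by (simp add: e_def)
      have "norm (x + e) \<le> norm x + t" using norm_triangle_ineq[of x e] ne by simp
      then have nxe: "norm (x + e) \<le> m" by (simp add: t_def)
      have "gf mu (x + e) = 2 * m * norm (x + e)" using gf_small[OF mu nxe[unfolded m_def]] by (simp add: m_def)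
      also have "\<dots> \<le> 2 * m * (norm x + t)" using \<open>norm (x + e) \<le> norm x + t\<close> m by simp
      finally have "2 * m * (norm x + t) \<ge> 2 * m * norm x + 2 * inner z e"
        using sg[of e] \<open>gf mu x = 2 * m * norm x\<close> by simp
      moreover have "inner z e = t * norm z"
        using zp t z0 by (simp add: e_def power2_norm_eq_inner[symmetric] power2_eq_square)
      ultimately have "m * t \<ge> t * norm z" by (simp add: algebra_simps)
      then have "norm z \<le> m" using t by (simp add: mult.commute)
      then have "norm z = m" using zge by simp
      then show ?thesis using nz' i1 i2 by (auto simp: m_def)
    next
      case False
      have gx: "gf mu x = mu + (norm x)\<^sup>2" using gf_large[OF mu, of x] False by (simp add: m_def)
      have "gf mu (x + (z - x)) \<le> mu + (norm z)\<^sup>2" using gf_le[OF mu, of z] by simp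
      then have "mu + (norm z)\<^sup>2 \<ge> mu + (norm x)\<^sup>2 + 2 * inner z (z - x)" using sg[of "z - x"] gx by simp
      then have "0 \<ge> (norm (z - x))\<^sup>2"
        by (simp add: power2_norm_eq_inner inner_diff_left inner_diff_right inner_commute algebra_simps)
      then have zx: "z = x" by simp
      then show ?thesis using nz' False i1 by (auto simp: m_def)
    qed
  qed
qed

lemma coord_bound:
  fixes x z e :: "'a::real_inner"
  assumes mu: "mu > 0" and b: "0 < bt" "bt \<le> 1"
    and cs: "(x = 0 \<and> norm z < bt\<^sup>2 * sqrt mu) \<or> (z = x \<and> norm x > sqrt mu / bt\<^sup>2)"
    and e0: "e \<noteq> 0"
  shows "gf mu (x + e) - gf mu x - 2 * inner z e > (1 - bt\<^sup>2) * (norm e)\<^sup>2"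
proof -
  define m where "m = sqrt mu"
  have m: "m > 0" using mu by (simp add: m_def)
  have mm: "m * m = mu" using mu by (simp add: m_def)
  have b2: "bt\<^sup>2 \<le> 1" "bt\<^sup>2 > 0" using b by (auto simp: power_le_one)
  have rp: "norm e > 0" using e0 by simp
  from cs show ?thesis
  proof
    assume A: "x = 0 \<and> norm z < bt\<^sup>2 * sqrt mu"
    then have x0: "x = 0" and zl: "norm z < bt\<^sup>2 * m" by (auto simp: m_def)
    have g0: "gf mu x = 0" using gf_small[OF mu, of "0::'a"] mu x0 by simp
    have cz: "inner z e \<le> norm z * norm e" by (rule norm_cauchy_schwarz)
    have zr: "norm z * norm e < bt\<^sup>2 * m * norm e" using zl rp by simp
    show ?thesis
    proof (cases "norm e \<le> m")
      case True
      have ge: "gf mu e = 2 * m * norm e" using gf_small[OF mu, of e] True by (simp add: m_def)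
      have "(1 - bt\<^sup>2) * (norm e * norm e) \<le> (1 - bt\<^sup>2) * (2 * m * norm e)"
        using b2 True rp m by (intro mult_left_mono) auto
      then show ?thesis using ge g0 x0 cz zr
        by (simp add: power2_eq_square algebra_simps)
    next
      case False
      have ge: "gf mu e = mu + (norm e)\<^sup>2" using gf_large[OF mu, of e] False by (simp add: m_def)
      have "0 \<le> (1 - bt\<^sup>2) * mu + bt\<^sup>2 * (norm e - m)\<^sup>2" using b2 mu by simp
      then show ?thesis using ge g0 x0 cz zr mm
        by (simp add: power2_eq_square algebra_simps)
    qed
  next
    assume B: "z = x \<and> norm x > sqrt mu / bt\<^sup>2"
    then have zx: "z = x" and xl: "norm x > m / bt\<^sup>2" by (auto simp: m_def)
    have "m / bt\<^sup>2 \<ge> m" using b2 m by (simp add: le_divide_eq)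
    then have xm: "norm x \<ge> m" using xl by simp
    have gx: "gf mu x = mu + (norm x)\<^sup>2" using gf_large[OF mu, of x] xm by (simp add: m_def)
    have ee: "(norm (x + e))\<^sup>2 = (norm x)\<^sup>2 + 2 * inner x e + (norm e)\<^sup>2"
      by (simp add: power2_norm_eq_inner inner_add_left inner_add_right inner_commute)
    show ?thesis
    proof (cases "norm (x + e) \<ge> m")
      case True
      have "gf mu (x + e) = mu + (norm (x + e))\<^sup>2" using gf_large[OF mu, of "x + e"] True by (simp add: m_def)
      moreover have "(1 - bt\<^sup>2) * (norm e)\<^sup>2 < (norm e)\<^sup>2" using b2 rp by simp
      ultimately show ?thesis using gx ee zx by simp
    next
      case False
      define r where "r = norm (x + e)"
      define a where "a = norm x"
      define p where "p = inner x (x + e)"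
      have r: "r < m" "r \<ge> 0" using False by (auto simp: r_def)
      have pa: "p \<le> a * r" unfolding p_def a_def r_def by (rule norm_cauchy_schwarz)
      have gxe: "gf mu (x + e) = 2 * m * r" using gf_small[OF mu, of "x + e"] False by (simp add: m_def r_def)
      have ie: "inner x e = p - a\<^sup>2"
        by (simp add: p_def a_def inner_add_right power2_norm_eq_inner)
      have ne: "(norm e)\<^sup>2 = r\<^sup>2 - 2 * p + a\<^sup>2"
        using ee ie by (simp add: r_def a_def)
      have ap: "a \<ge> 0" by (simp add: a_def)
      have "a * bt\<^sup>2 > m" using xl b2 by (simp add: a_def divide_less_eq)
      moreover have "a * bt\<^sup>2 \<le> a * bt" using ap b
        by (intro mult_left_mono) (auto simp: power2_eq_square mult_le_cancel_left1)
      ultimately have abm: "a * bt > m" by linarith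
      have "bt * r \<le> r" using b r by (simp add: mult_left_le_one_le)
      then have "bt * (a - r) > m - r" using abm by (simp add: right_diff_distrib mult.commute)
      moreover have "m - r > 0" using r by simp
      ultimately have "(m - r)\<^sup>2 < (bt * (a - r))\<^sup>2"
        by (intro power_strict_mono) auto
      then have key: "bt\<^sup>2 * a\<^sup>2 - 2 * (bt\<^sup>2 * (a * r)) + bt\<^sup>2 * r\<^sup>2 > m * m - 2 * (m * r) + r\<^sup>2"
        by (simp add: power2_eq_square algebra_simps)
      have bp: "bt\<^sup>2 * p \<le> bt\<^sup>2 * (a * r)" using pa b2 by (intro mult_left_mono) auto
      have lhs: "gf mu (x + e) - gf mu x - 2 * inner z e = 2 * (m * r) - m * m + a\<^sup>2 - 2 * p"
        using gxe gx zx ie mm by (simp add: a_def)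
      have rhs: "(1 - bt\<^sup>2) * (norm e)\<^sup>2 = r\<^sup>2 - 2 * p + a\<^sup>2 - bt\<^sup>2 * r\<^sup>2 + 2 * (bt\<^sup>2 * p) - bt\<^sup>2 * a\<^sup>2"
        unfolding ne by (simp add: algebra_simps)
      show ?thesis unfolding lhs rhs using key bp by linarith
    qed
  qed
qed

lemma adjoint_inner:
  fixes A :: "'a::{real_normed_field,real_inner} ^ 'n ^ 'm"
  assumes cjp: "\<And>a c b::'a. inner (a * c) b = inner c (cj a * b)"
  shows "inner (A *v x) y = inner x (adjoint cj A *v y)"
proof -
  have "inner (A *v x) y = (\<Sum>r\<in>UNIV. \<Sum>i\<in>UNIV. inner (A $ r $ i * x $ i) (y $ r))"
    by (simp add: inner_vec_def matrix_vector_mult_def inner_sum_left)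
  also have "\<dots> = (\<Sum>i\<in>UNIV. \<Sum>r\<in>UNIV. inner (A $ r $ i * x $ i) (y $ r))"
    by (rule sum.swap)
  also have "\<dots> = (\<Sum>i\<in>UNIV. \<Sum>r\<in>UNIV. inner (x $ i) (cj (A $ r $ i) * y $ r))"
    by (simp only: cjp)
  also have "\<dots> = inner x (adjoint cj A *v y)"
    by (simp add: inner_vec_def matrix_vector_mult_def inner_sum_right adjoint_def)
  finally show ?thesis .
qed

lemma Q2_sum: "Q2_card mu v = (\<Sum>j\<in>UNIV. qf mu (v $ j))"
  by (simp add: Q2_card_def qf_def)

lemma norm_sq_sum: "(norm (d :: 'a::real_inner ^ 'n))\<^sup>2 = (\<Sum>j\<in>UNIV. inner (d $ j) (d $ j))"
  by (simp add: power2_norm_eq_inner inner_vec_def)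

lemma norm_add_sq: "(norm (u + v :: 'b::real_inner))\<^sup>2 = (norm u)\<^sup>2 + 2 * inner u v + (norm v)\<^sup>2"
  by (simp add: power2_norm_eq_inner inner_add_left inner_add_right inner_commute)

lemma Kreg_expand:
  fixes A :: "'a::{real_normed_field,real_inner} ^ 'n ^ 'm" and x d :: "'a ^ 'n" and b :: "'a ^ 'm"
  assumes cjp: "\<And>a c b::'a. inner (a * c) b = inner c (cj a * b)"
  defines "zz \<equiv> x - adjoint cj A *v (A *v x - b)"
  shows "K_reg mu A b (x + d) - K_reg mu A b x =
    (\<Sum>j\<in>UNIV. gf mu (x $ j + d $ j) - gf mu (x $ j) - 2 * inner (zz $ j) (d $ j))
    - (norm d)\<^sup>2 + (norm (A *v d))\<^sup>2"
proof -
  define r where "r = adjoint cj A *v (A *v x - b)"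
  have zr: "zz = x - r" by (simp add: zz_def r_def)
  have eq2: "A *v (x + d) - b = (A *v x - b) + A *v d" by (simp add: matrix_vector_right_distrib)
  have n1: "(norm (A *v (x + d) - b))\<^sup>2 = (norm (A *v x - b))\<^sup>2 + 2 * inner (A *v x - b) (A *v d) + (norm (A *v d))\<^sup>2"
    unfolding eq2 by (rule norm_add_sq)
  have "inner (A *v x - b) (A *v d) = inner d r"
    by (simp add: inner_commute adjoint_inner[OF cjp] r_def)
  also have "\<dots> = (\<Sum>j\<in>UNIV. inner (d $ j) (r $ j))" by (simp add: inner_vec_def)
  finally have n2: "inner (A *v x - b) (A *v d) = (\<Sum>j\<in>UNIV. inner (d $ j) (r $ j))" .
  have tw: "qf mu (x $ j + d $ j) - qf mu (x $ j) + 2 * inner (d $ j) (r $ j) =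
      gf mu (x $ j + d $ j) - gf mu (x $ j) - 2 * inner (zz $ j) (d $ j) - inner (d $ j) (d $ j)" for j
    by (simp add: gf_def zr power2_norm_eq_inner inner_add_left inner_add_right inner_diff_left inner_diff_right inner_commute algebra_simps)
  have "K_reg mu A b (x + d) - K_reg mu A b x =
     (\<Sum>j\<in>UNIV. qf mu (x $ j + d $ j) - qf mu (x $ j) + 2 * inner (d $ j) (r $ j)) + (norm (A *v d))\<^sup>2"
    unfolding K_reg_def Q2_sum n1 n2
    by (simp add: sum.distrib sum_subtractf sum_distrib_left)
  also have "\<dots> = (\<Sum>j\<in>UNIV. gf mu (x $ j + d $ j) - gf mu (x $ j) - 2 * inner (zz $ j) (d $ j) - inner (d $ j) (d $ j)) + (norm (A *v d))\<^sup>2"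
    using tw by simp
  also have "\<dots> = (\<Sum>j\<in>UNIV. gf mu (x $ j + d $ j) - gf mu (x $ j) - 2 * inner (zz $ j) (d $ j))
    - (norm d)\<^sup>2 + (norm (A *v d))\<^sup>2"
    unfolding norm_sq_sum by (simp add: sum_subtractf)
  finally show ?thesis .
qed

lemma norm_axis_gen: "norm (axis j (e::'a::real_inner) :: 'a ^ 'n) = norm e"
proof -
  have "(norm (axis j e :: 'a ^ 'n))\<^sup>2 = (norm e)\<^sup>2"
    unfolding norm_sq_sum by (simp add: axis_def power2_norm_eq_inner if_distrib cong: if_cong)
  then show ?thesis by simp
qed

lemma sum_single:
  fixes f :: "'n::finite \<Rightarrow> real"
  assumes "\<And>i. i \<noteq> j \<Longrightarrow> f i = 0"
  shows "(\<Sum>i\<in>UNIV. f i) = f j"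
proof -
  have "(\<Sum>i\<in>UNIV. f i) = (\<Sum>i\<in>UNIV. if i = j then f j else 0)"
    using assms by (intro sum.cong) auto
  then show ?thesis by simp
qed

lemma stat_subgrad:
  fixes A :: "'a::{real_normed_field,real_inner} ^ 'n ^ 'm" and x :: "'a ^ 'n" and b :: "'a ^ 'm"
  assumes cjp: "\<And>a c b::'a. inner (a * c) b = inner c (cj a * b)"
    and mu: "mu > 0"
    and col: "\<And>j (e::'a). (norm (A *v axis j e))\<^sup>2 \<le> (norm e)\<^sup>2"
    and st: "stationary (K_reg mu A b) x"
  defines "zz \<equiv> x - adjoint cj A *v (A *v x - b)"
  shows "gf mu (x $ j + e) \<ge> gf mu (x $ j) + 2 * inner (zz $ j) e"
proof (rule ccontr)
  assume nt: "\<not> ?thesis"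
  define D where "D = gf mu (x $ j + e) - gf mu (x $ j) - 2 * inner (zz $ j) e"
  have D: "D < 0" using nt by (simp add: D_def)
  have e0: "e \<noteq> 0"
  proof
    assume "e = 0" then show False using D by (simp add: D_def)
  qed
  then have ep: "norm e > 0" by simp
  define eps where "eps = - D / (2 * norm e)"
  have eps: "eps > 0" using D ep by (simp add: eps_def divide_neg_pos)
  let ?K = "K_reg mu A b"
  have "0 \<in> frechet_subdiff ?K x" using st by (simp add: stationary_def)
  then have "ereal 0 \<le> Liminf (at x) (\<lambda>y. ereal ((?K y - ?K x - inner 0 (y - x)) / norm (y - x)))"
    by (simp add: frechet_subdiff_def zero_ereal_def)
  then have L: "\<forall>y<ereal 0. \<forall>\<^sub>F z in at x. y < ereal ((?K z - ?K x - inner 0 (z - x)) / norm (z - x))"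
    unfolding le_Liminf_iff .
  have lt: "ereal (- eps) < ereal 0" using eps by simp
  have "\<forall>\<^sub>F y in at x. ereal (- eps) < ereal ((?K y - ?K x - inner 0 (y - x)) / norm (y - x))"
    using L lt by blast
  then obtain dl where dl: "dl > 0" and
    P: "\<And>y. y \<noteq> x \<Longrightarrow> dist y x < dl \<Longrightarrow> - eps < (?K y - ?K x) / norm (y - x)"
    unfolding eventually_at by auto
  define s where "s = min 1 (dl / (2 * norm e))"
  have s: "s > 0" "s \<le> 1" "s * norm e \<le> dl / 2"
    using dl ep by (auto simp: s_def field_simps min_def)
  define d :: "'a ^ 'n" where "d = axis j (s *\<^sub>R e)"
  have nd: "norm d = s * norm e" using s by (simp add: d_def norm_axis_gen)
  have dne: "d \<noteq> 0" using nd s ep by auto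
  have "- eps < (?K (x + d) - ?K x) / norm (x + d - x)"
    using P[of "x + d"] dne nd s dl by (simp add: dist_norm)
  then have lo: "- eps * (s * norm e) < ?K (x + d) - ?K x"
    using nd s ep by (simp add: pos_less_divide_eq)
  have exp: "?K (x + d) - ?K x = (\<Sum>i\<in>UNIV. gf mu (x $ i + d $ i) - gf mu (x $ i) - 2 * inner (zz $ i) (d $ i))
    - (norm d)\<^sup>2 + (norm (A *v d))\<^sup>2"
    unfolding zz_def by (rule Kreg_expand[OF cjp])
  have ssum: "(\<Sum>i\<in>UNIV. gf mu (x $ i + d $ i) - gf mu (x $ i) - 2 * inner (zz $ i) (d $ i))
     = gf mu (x $ j + s *\<^sub>R e) - gf mu (x $ j) - 2 * inner (zz $ j) (s *\<^sub>R e)"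
    by (subst sum_single[of j]) (auto simp: d_def axis_def)
  have "(norm (A *v d))\<^sup>2 \<le> (norm d)\<^sup>2"
    using col[of j "s *\<^sub>R e"] by (simp add: d_def norm_axis_gen)
  then have up: "?K (x + d) - ?K x \<le> gf mu (x $ j + s *\<^sub>R e) - gf mu (x $ j) - 2 * s * inner (zz $ j) e"
    using exp ssum by simp
  have cv: "gf mu (x $ j + s *\<^sub>R e) \<le> (1 - s) * gf mu (x $ j) + s * gf mu (x $ j + e)"
    using gf_convex[OF mu, of s "x $ j" e] s by simp
  have "- eps * (s * norm e) < s * D"
    using lo up cv by (simp add: D_def algebra_simps)
  then have "s * (- eps * norm e) < s * D" by (simp add: algebra_simps)
  then have "- eps * norm e < D" using s(1) mult_less_cancel_left_pos by blast
  moreover have "- eps * norm e = D / 2" using ep by (simp add: eps_def)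
  ultimately show False using D by simp
qed

lemma sum_if_card: "(\<Sum>j\<in>UNIV. if (v::'a::zero ^ 'n) $ j \<noteq> 0 then mu else 0) = mu * real (card_nz v)"
proof -
  have "(\<Sum>j\<in>UNIV. if v $ j \<noteq> 0 then mu else 0) = (\<Sum>j\<in>{j\<in>UNIV. v $ j \<noteq> 0}. mu)"
    by (rule sum.inter_filter[symmetric]) simp
  then show ?thesis by (simp add: card_nz_def)
qed

lemma qf_le:
  assumes "mu > 0"
  shows "qf mu t \<le> (if t \<noteq> 0 then mu else 0)"
  using assms by (auto simp: qf_def)

lemma Q2_le:
  assumes "mu > 0"
  shows "Q2_card mu (v::'a::real_normed_vector ^ 'n) \<le> mu * real (card_nz v)"
  unfolding Q2_sum sum_if_card[symmetric] by (intro sum_mono) (rule qf_le[OF assms])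

lemma Q2_eq:
  assumes "mu > 0" "\<And>j. v $ j = 0 \<or> norm (v $ j) \<ge> sqrt mu"
  shows "Q2_card mu (v::'a::real_normed_vector ^ 'n) = mu * real (card_nz v)"
  unfolding Q2_sum sum_if_card[symmetric]
proof (intro sum.cong refl)
  fix j
  show "qf mu (v $ j) = (if v $ j \<noteq> 0 then mu else 0)"
    using assms(2)[of j] assms(1) by (auto simp: qf_def)
qed

lemma card_nz_diff: "card_nz ((y::'a::ab_group_add ^ 'n) - x) \<le> card_nz y + card_nz x"
proof -
  have "{i. (y - x) $ i \<noteq> 0} \<subseteq> {i. y $ i \<noteq> 0} \<union> {i. x $ i \<noteq> 0}" by auto
  then have "card {i. (y - x) $ i \<noteq> 0} \<le> card ({i. y $ i \<noteq> 0} \<union> {i. x $ i \<noteq> 0})"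
    by (intro card_mono) auto
  also have "\<dots> \<le> card {i. y $ i \<noteq> 0} + card {i. x $ i \<noteq> 0}" by (rule card_Un_le)
  finally show ?thesis by (simp add: card_nz_def)
qed

lemma col_bound:
  fixes A :: "'a::{real_normed_field,real_inner} ^ 'n ^ 'm"
  assumes "col_inf_norm A \<le> 1"
  shows "(norm (A *v axis j e))\<^sup>2 \<le> (norm e)\<^sup>2"
proof -
  have cj: "(A *v axis j e) $ r = A $ r $ j * e" for r
    by (simp add: matrix_vector_mult_def axis_def if_distrib cong: if_cong)
  have "sqrt (\<Sum>r\<in>UNIV. (norm (A $ r $ j))\<^sup>2) \<le> col_inf_norm A"
    unfolding col_inf_norm_def by (intro Max_ge) auto
  then have "sqrt (\<Sum>r\<in>UNIV. (norm (A $ r $ j))\<^sup>2) \<le> 1" using assms by linarith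
  then have S: "(\<Sum>r\<in>UNIV. (norm (A $ r $ j))\<^sup>2) \<le> 1" by (metis real_sqrt_le_1_iff)
  have "(norm (A *v axis j e))\<^sup>2 = (\<Sum>r\<in>UNIV. (norm (A $ r $ j))\<^sup>2) * (norm e)\<^sup>2"
    unfolding norm_sq_sum cj by (simp add: power2_norm_eq_inner[symmetric] norm_mult power_mult_distrib sum_distrib_right)
  also have "\<dots> \<le> 1 * (norm e)\<^sup>2" using S by (intro mult_right_mono) auto
  finally show ?thesis by simp
qed

lemma beta_bdd: "bdd_below {norm (A *v x) / norm x | x. x \<noteq> 0 \<and> card_nz x \<le> k}"
  by (rule bdd_belowI[of _ 0]) auto

lemma beta_le1:
  fixes A :: "'a::{real_normed_field,real_inner} ^ 'n ^ 'm"
  assumes "col_inf_norm A \<le> 1" "N \<ge> 1"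
  shows "beta A N \<le> 1"
proof -
  define v :: "'a ^ 'n" where "v = axis undefined 1"
  have nv: "norm v = 1" by (simp add: v_def norm_axis_gen)
  have cv: "card_nz v = 1" by (simp add: v_def card_nz_def axis_def)
  have mem: "norm (A *v v) / norm v \<in> {norm (A *v x) / norm x | x. x \<noteq> 0 \<and> card_nz x \<le> N}"
    using nv cv assms(2) by (auto intro!: exI[of _ v])
  have "beta A N \<le> norm (A *v v) / norm v"
    unfolding beta_def by (rule cInf_lower[OF mem beta_bdd])
  also have "\<dots> \<le> 1"
  proof -
    have "(norm (A *v v))\<^sup>2 \<le> 1" using col_bound[OF assms(1), of undefined 1] by (simp add: v_def)
    then have "norm (A *v v) \<le> 1" by (simp add: power_le_one_iff)
    then show ?thesis using nv by simp
  qed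
  finally show ?thesis .
qed

lemma beta_lower:
  fixes A :: "'a::{real_normed_field,real_inner} ^ 'n ^ 'm"
  assumes "d \<noteq> 0" "card_nz d \<le> N" "beta A N \<ge> 0"
  shows "(beta A N)\<^sup>2 * (norm d)\<^sup>2 \<le> (norm (A *v d))\<^sup>2"
proof -
  have "beta A N \<le> norm (A *v d) / norm d"
    unfolding beta_def using assms by (intro cInf_lower[OF _ beta_bdd]) auto
  then have "beta A N * norm d \<le> norm (A *v d)" using assms(1) by (simp add: pos_le_divide_eq)
  then have "(beta A N * norm d)\<^sup>2 \<le> (norm (A *v d))\<^sup>2"
    using assms(3) by (intro power_mono) auto
  then show ?thesis by (simp add: power_mult_distrib)
qed

lemma part1:
  fixes A :: "'a::{real_normed_field,real_inner} ^ 'n ^ 'm" and b :: "'a ^ 'm" and x y :: "'a ^ 'n"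
  assumes cjp: "\<And>a c b::'a. inner (a * c) b = inner c (cj a * b)"
    and mu: "mu > 0" and bp: "beta A N > 0" and bt1: "beta A N \<le> 1"
    and cs: "\<And>j. (x $ j = 0 \<and> norm ((x - adjoint cj A *v (A *v x - b)) $ j) < (beta A N)\<^sup>2 * sqrt mu) \<or>
                 ((x - adjoint cj A *v (A *v x - b)) $ j = x $ j \<and> norm (x $ j) > sqrt mu / (beta A N)\<^sup>2)"
    and yx: "y \<noteq> x" and cd: "card_nz (y - x) \<le> N"
  shows "K_reg mu A b y > K_reg mu A b x"
proof -
  define zz where "zz = x - adjoint cj A *v (A *v x - b)"
  define bt where "bt = beta A N"
  define d where "d = y - x"
  have y: "y = x + d" by (simp add: d_def)
  have d0: "d \<noteq> 0" using yx by (simp add: d_def)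
  then obtain j where dj: "d $ j \<noteq> 0" by (auto simp: vec_eq_iff)
  have exp: "K_reg mu A b (x + d) - K_reg mu A b x =
    (\<Sum>j\<in>UNIV. gf mu (x $ j + d $ j) - gf mu (x $ j) - 2 * inner (zz $ j) (d $ j))
    - (norm d)\<^sup>2 + (norm (A *v d))\<^sup>2"
    unfolding zz_def by (rule Kreg_expand[OF cjp])
  have cb: "gf mu (x $ i + e) - gf mu (x $ i) - 2 * inner (zz $ i) e > (1 - bt\<^sup>2) * (norm e)\<^sup>2"
    if "e \<noteq> 0" for i e
    using coord_bound[OF mu bp bt1 cs[of i] that] by (simp add: zz_def bt_def)
  have "(\<Sum>i\<in>UNIV. (1 - bt\<^sup>2) * (norm (d $ i))\<^sup>2) <
        (\<Sum>i\<in>UNIV. gf mu (x $ i + d $ i) - gf mu (x $ i) - 2 * inner (zz $ i) (d $ i))"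
  proof (rule sum_strict_mono_ex1)
    show "\<forall>i\<in>UNIV. (1 - bt\<^sup>2) * (norm (d $ i))\<^sup>2 \<le> gf mu (x $ i + d $ i) - gf mu (x $ i) - 2 * inner (zz $ i) (d $ i)"
    proof
      fix i :: 'n
      show "(1 - bt\<^sup>2) * (norm (d $ i))\<^sup>2 \<le> gf mu (x $ i + d $ i) - gf mu (x $ i) - 2 * inner (zz $ i) (d $ i)"
        using cb[of "d $ i" i] by (cases "d $ i = 0") auto
    qed
    show "\<exists>i\<in>UNIV. (1 - bt\<^sup>2) * (norm (d $ i))\<^sup>2 < gf mu (x $ i + d $ i) - gf mu (x $ i) - 2 * inner (zz $ i) (d $ i)"
      using cb[OF dj] by blast
  qed simp
  moreover have "(\<Sum>i\<in>UNIV. (1 - bt\<^sup>2) * (norm (d $ i))\<^sup>2) = (1 - bt\<^sup>2) * (norm d)\<^sup>2"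
    unfolding norm_sq_sum by (simp add: sum_distrib_left power2_norm_eq_inner)
  moreover have "bt\<^sup>2 * (norm d)\<^sup>2 \<le> (norm (A *v d))\<^sup>2"
  proof -
    have "card_nz d \<le> N" using cd by (simp add: d_def)
    from beta_lower[where A=A, OF d0 this] bp show ?thesis by (simp add: bt_def)
  qed
  ultimately show ?thesis using exp y by (simp add: algebra_simps)
qed

lemma mv_scaleR: "(A :: 'a::real_algebra_1 ^ 'n ^ 'm) *v (c *\<^sub>R v) = c *\<^sub>R (A *v v)"
  by (simp add: matrix_vector_mult_def vec_eq_iff scaleR_sum_right)

lemma ray_lemma:
  fixes A :: "'a::{real_normed_field,real_inner} ^ 'n ^ 'm" and b :: "'a ^ 'm" and y :: "'a ^ 'n"
  assumes mu: "mu > 0" and col: "col_inf_norm A \<le> 1"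
    and a0: "0 < norm (y $ j)" and am: "norm (y $ j) < sqrt mu"
  shows "\<exists>y0 y1. y0 \<noteq> y1 \<and>
     {i. 0 < norm (y0 $ i) \<and> norm (y0 $ i) < sqrt mu} = {i. 0 < norm (y $ i) \<and> norm (y $ i) < sqrt mu} - {j} \<and>
     {i. 0 < norm (y1 $ i) \<and> norm (y1 $ i) < sqrt mu} = {i. 0 < norm (y $ i) \<and> norm (y $ i) < sqrt mu} - {j} \<and>
     sqrt mu * K_reg mu A b y \<ge> (sqrt mu - norm (y $ j)) * K_reg mu A b y0 + norm (y $ j) * K_reg mu A b y1"
proof -
  define m where "m = sqrt mu"
  have m: "m > 0" using mu by (simp add: m_def)
  have mm: "m * m = mu" using mu by (simp add: m_def)
  define a where "a = norm (y $ j)"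
  have a: "0 < a" "a < m" using a0 am by (auto simp: a_def m_def)
  define u where "u = (1 / a) *\<^sub>R (y $ j)"
  have nu: "norm u = 1" using a by (simp add: u_def a_def)
  define ys where "ys t = (\<chi> i. if i = j then t *\<^sub>R u else y $ i)" for t
  have ysa: "ys a = y" using a by (simp add: ys_def u_def vec_eq_iff)
  have ysd: "ys t = ys 0 + t *\<^sub>R axis j u" for t
    by (simp add: ys_def vec_eq_iff axis_def)
  define R where "R = (\<Sum>i\<in>UNIV - {j}. qf mu (y $ i))"
  define C0 where "C0 = (norm (A *v ys 0 - b))\<^sup>2"
  define C1 where "C1 = inner (A *v ys 0 - b) (A *v axis j u)"
  define C2 where "C2 = (norm (A *v axis j u))\<^sup>2"
  have C2: "C2 \<le> 1" using col_bound[OF col, of j u] nu by (simp add: C2_def)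
  have hform: "K_reg mu A b (ys t) = R + (2 * m * t - t\<^sup>2) + (C0 + 2 * t * C1 + t\<^sup>2 * C2)"
    if t: "0 \<le> t" "t \<le> m" for t
  proof -
    have "Q2_card mu (ys t) = qf mu (ys t $ j) + (\<Sum>i\<in>UNIV - {j}. qf mu (ys t $ i))"
      unfolding Q2_sum by (rule sum.remove) auto
    also have "(\<Sum>i\<in>UNIV - {j}. qf mu (ys t $ i)) = R"
      unfolding R_def by (intro sum.cong) (auto simp: ys_def)
    also have "qf mu (ys t $ j) = 2 * m * t - t\<^sup>2"
      using t nu mm by (simp add: ys_def qf_def m_def[symmetric] power2_eq_square algebra_simps)
    finally have Q: "Q2_card mu (ys t) = R + (2 * m * t - t\<^sup>2)" by simp
    have eqn: "A *v ys t - b = (A *v ys 0 - b) + t *\<^sub>R (A *v axis j u)"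
      by (subst ysd) (simp add: matrix_vector_right_distrib mv_scaleR)
    have "(norm (A *v ys t - b))\<^sup>2 = C0 + 2 * t * C1 + t\<^sup>2 * C2"
      unfolding eqn norm_add_sq by (simp add: C0_def C1_def C2_def power_mult_distrib)
    then show ?thesis using Q by (simp add: K_reg_def)
  qed
  have h0: "K_reg mu A b (ys 0) = R + C0" using hform[of 0] m by simp
  have hm: "K_reg mu A b (ys m) = R + (2 * m * m - m\<^sup>2) + (C0 + 2 * m * C1 + m\<^sup>2 * C2)" using hform[of m] m by simp
  have ha: "K_reg mu A b y = R + (2 * m * a - a\<^sup>2) + (C0 + 2 * a * C1 + a\<^sup>2 * C2)" using hform[of a] a ysa by simp
  have "m * K_reg mu A b y - ((m - a) * K_reg mu A b (ys 0) + a * K_reg mu A b (ys m)) = (1 - C2) * a * (m - a) * m"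
    unfolding h0 hm ha by (simp add: power2_eq_square algebra_simps)
  moreover have "(1 - C2) * a * (m - a) * m \<ge> 0" using C2 a m by simp
  ultimately have comb: "m * K_reg mu A b y \<ge> (m - a) * K_reg mu A b (ys 0) + a * K_reg mu A b (ys m)" by simp
  have ne: "ys 0 \<noteq> ys m"
  proof
    assume "ys 0 = ys m"
    then have "ys 0 $ j = ys m $ j" by simp
    then have "m *\<^sub>R u = 0" by (simp add: ys_def)
    then show False using m nu by simp
  qed
  have M0: "{i. 0 < norm (ys 0 $ i) \<and> norm (ys 0 $ i) < sqrt mu} = {i. 0 < norm (y $ i) \<and> norm (y $ i) < sqrt mu} - {j}"
    by (auto simp: ys_def)
  have M1: "{i. 0 < norm (ys m $ i) \<and> norm (ys m $ i) < sqrt mu} = {i. 0 < norm (y $ i) \<and> norm (y $ i) < sqrt mu} - {j}"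
    using m nu by (auto simp: ys_def m_def)
  show ?thesis using ne M0 M1 comb unfolding m_def a_def by blast
qed

theorem main_generic:
  fixes A :: "'a::{real_normed_field,real_inner} ^ 'n ^ 'm" and b :: "'a ^ 'm" and x :: "'a ^ 'n"
  assumes cjp: "\<And>a c b::'a. inner (a * c) b = inner c (cj a * b)"
    and col: "col_inf_norm A \<le> 1" and mu: "mu > 0" and N: "N \<ge> 1" and bp: "beta A N > 0"
    and st: "stationary (K_reg mu A b) x"
    and zc: "\<forall>i. norm (((x - adjoint cj A *v (A *v x)) + adjoint cj A *v b) $ i)
               \<notin> {(beta A N)\<^sup>2 * sqrt mu .. sqrt mu / (beta A N)\<^sup>2}"
    and cc: "2 * mu * real (card_nz x) + (norm (A *v x - b))\<^sup>2 < mu * real N + mu"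
  shows "unique_global_min (K_fun mu A b) x \<and> unique_global_min (K_reg mu A b) x"
proof -
  define zz where "zz = x - adjoint cj A *v (A *v x - b)"
  define bt where "bt = beta A N"
  have zzeq: "zz = (x - adjoint cj A *v (A *v x)) + adjoint cj A *v b"
    by (simp add: zz_def matrix_vector_mult_diff_distrib algebra_simps)
  have bt1: "beta A N \<le> 1" using beta_le1[OF col N] .
  have colb: "\<And>j (e::'a). (norm (A *v axis j e))\<^sup>2 \<le> (norm e)\<^sup>2" using col_bound[OF col] .
  have cs: "(x $ j = 0 \<and> norm (zz $ j) < (beta A N)\<^sup>2 * sqrt mu) \<or>
            (zz $ j = x $ j \<and> norm (x $ j) > sqrt mu / (beta A N)\<^sup>2)" for j
  proof (rule sub_consequence[OF mu bp bt1])
    show "gf mu (x $ j) + 2 * inner (zz $ j) e \<le> gf mu (x $ j + e)" for e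
      unfolding zz_def by (rule stat_subgrad[OF cjp mu colb st])
    show "norm (zz $ j) \<notin> {(beta A N)\<^sup>2 * sqrt mu..sqrt mu / (beta A N)\<^sup>2}"
      using zc zzeq by simp
  qed
  have mb: "sqrt mu \<le> sqrt mu / (beta A N)\<^sup>2"
    using bp bt1 mu by (simp add: le_divide_eq power_le_one)
  have KrK: "K_reg mu A b x = K_fun mu A b x"
  proof -
    have "Q2_card mu x = mu * real (card_nz x)"
    proof (rule Q2_eq[OF mu])
      fix j show "x $ j = 0 \<or> sqrt mu \<le> norm (x $ j)" using cs[of j] mb by auto
    qed
    then show ?thesis by (simp add: K_reg_def K_fun_def)
  qed
  have Kge: "K_reg mu A b y \<le> K_fun mu A b y" for y
    using Q2_le[OF mu, of y] by (simp add: K_reg_def K_fun_def)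
  have p1: "K_reg mu A b y > K_reg mu A b x" if "y \<noteq> x" "card_nz (y - x) \<le> N" for y
    by (rule part1[OF cjp mu bp bt1 _ that]) (use cs zz_def in simp)
  have p2: "K_fun mu A b y > K_fun mu A b x" if "card_nz (y - x) > N" for y
  proof -
    have "real (card_nz (y - x)) \<le> real (card_nz y) + real (card_nz x)"
      using card_nz_diff[of y x] by simp
    then have "real (card_nz y) \<ge> real N + 1 - real (card_nz x)" using that by linarith
    then have "mu * real (card_nz y) \<ge> mu * (real N + 1 - real (card_nz x))"
      using mu by (intro mult_left_mono) auto
    moreover have "K_fun mu A b y \<ge> mu * real (card_nz y)" by (simp add: K_fun_def)
    moreover have "K_fun mu A b x = mu * real (card_nz x) + (norm (A *v x - b))\<^sup>2" by (simp add: K_fun_def)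
    moreover have "mu * (real N + 1 - real (card_nz x)) = mu * real N + mu - mu * real (card_nz x)"
      by (simp add: algebra_simps)
    moreover have "2 * mu * real (card_nz x) = 2 * (mu * real (card_nz x))" by simp
    ultimately show ?thesis using cc by linarith
  qed
  have Kuniq: "K_fun mu A b x < K_fun mu A b y" if "y \<noteq> x" for y
  proof (cases "card_nz (y - x) \<le> N")
    case True
    then show ?thesis using p1[OF that True] Kge[of y] KrK by simp
  next
    case False
    then show ?thesis using p2 by simp
  qed
  define M where "M y = {i. 0 < norm (y $ i) \<and> norm (y $ i) < sqrt mu}" for y :: "'a ^ 'n"
  have claim: "\<forall>y. card (M y) = k \<longrightarrow> K_fun mu A b x \<le> K_reg mu A b y \<and> (y \<noteq> x \<longrightarrow> K_fun mu A b x < K_reg mu A b y)" for k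
  proof (induction k)
    case 0
    show ?case
    proof (intro allI impI)
      fix y :: "'a ^ 'n"
      assume "card (M y) = 0"
      then have "M y = {}" by (simp add: M_def)
      then have "\<And>j. y $ j = 0 \<or> norm (y $ j) \<ge> sqrt mu" by (force simp: M_def)
      then have "Q2_card mu y = mu * real (card_nz y)" by (rule Q2_eq[OF mu])
      then have "K_reg mu A b y = K_fun mu A b y" by (simp add: K_reg_def K_fun_def)
      then show "K_fun mu A b x \<le> K_reg mu A b y \<and> (y \<noteq> x \<longrightarrow> K_fun mu A b x < K_reg mu A b y)"
        using Kuniq[of y] by (cases "y = x") auto
    qed
  next
    case (Suc k)
    show ?case
    proof (intro allI impI)
      fix y :: "'a ^ 'n"
      assume cM: "card (M y) = Suc k"
      then obtain j where j: "j \<in> M y" by (metis card.empty ex_in_conv nat.distinct(1))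
      then have a0: "0 < norm (y $ j)" and am: "norm (y $ j) < sqrt mu" by (auto simp: M_def)
      obtain y0 y1 where ne: "y0 \<noteq> y1" and M0: "M y0 = M y - {j}" and M1: "M y1 = M y - {j}"
        and comb: "sqrt mu * K_reg mu A b y \<ge> (sqrt mu - norm (y $ j)) * K_reg mu A b y0 + norm (y $ j) * K_reg mu A b y1"
        using ray_lemma[OF mu col a0 am, of b] unfolding M_def by blast
      have ck: "card (M y - {j}) = k" using cM j by (simp add: card_Diff_singleton)
      have I0: "K_fun mu A b x \<le> K_reg mu A b y0 \<and> (y0 \<noteq> x \<longrightarrow> K_fun mu A b x < K_reg mu A b y0)"
        using Suc.IH M0 ck by simp
      have I1: "K_fun mu A b x \<le> K_reg mu A b y1 \<and> (y1 \<noteq> x \<longrightarrow> K_fun mu A b x < K_reg mu A b y1)"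
        using Suc.IH M1 ck by simp
      define a where "a = norm (y $ j)"
      define m where "m = sqrt mu"
      define Kx where "Kx = K_fun mu A b x"
      have am': "0 < a" "0 < m - a" using a0 am by (auto simp: a_def m_def)
      have "(m - a) * K_reg mu A b y0 + a * K_reg mu A b y1 > (m - a) * Kx + a * Kx"
      proof (cases "y0 = x")
        case True
        then have "y1 \<noteq> x" using ne by simp
        then have "K_reg mu A b y1 > Kx" using I1 by (simp add: Kx_def)
        then have "a * K_reg mu A b y1 > a * Kx" using am' by simp
        moreover have "(m - a) * K_reg mu A b y0 \<ge> (m - a) * Kx" using I0 am' by (simp add: Kx_def)
        ultimately show ?thesis by simp
      next
        case False
        then have "K_reg mu A b y0 > Kx" using I0 by (simp add: Kx_def)
        then have "(m - a) * K_reg mu A b y0 > (m - a) * Kx" using am' by simp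
        moreover have "a * K_reg mu A b y1 \<ge> a * Kx" using I1 am' by (simp add: Kx_def)
        ultimately show ?thesis by simp
      qed
      then have "m * K_reg mu A b y > m * Kx" using comb by (simp add: a_def m_def algebra_simps)
      then have "K_reg mu A b y > Kx" using mu by (simp add: m_def)
      then show "K_fun mu A b x \<le> K_reg mu A b y \<and> (y \<noteq> x \<longrightarrow> K_fun mu A b x < K_reg mu A b y)"
        by (simp add: Kx_def)
    qed
  qed
  have "unique_global_min (K_fun mu A b) x" unfolding unique_global_min_def using Kuniq by blast
  moreover have "unique_global_min (K_reg mu A b) x"
    unfolding unique_global_min_def using claim KrK by auto
  ultimately show ?thesis by blast
qed

theorem theorem4p5:
  shows "(\<forall>(A :: real ^ 'n ^ 'm) (b :: real ^ 'm) (mu :: real) (N :: nat) (x' :: real ^ 'n).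
            col_inf_norm A \<le> 1 \<and> mu > 0 \<and> N \<ge> 1 \<and> beta A N > 0 \<and>
            stationary (K_reg mu A b) x' \<and>
            (let z' = (x' - adjoint (\<lambda>t. t) A *v (A *v x')) + adjoint (\<lambda>t. t) A *v b in
               \<forall>i. norm (z' $ i) \<notin> {(beta A N)\<^sup>2 * sqrt mu .. sqrt mu / (beta A N)\<^sup>2}) \<and>
            2 * mu * real (card_nz x') + (norm (A *v x' - b))\<^sup>2 < mu * real N + mu
          \<longrightarrow> unique_global_min (K_fun mu A b) x' \<and> unique_global_min (K_reg mu A b) x')
       \<and>
         (\<forall>(A :: complex ^ 'n ^ 'm) (b :: complex ^ 'm) (mu :: real) (N :: nat) (x' :: complex ^ 'n).
            col_inf_norm A \<le> 1 \<and> mu > 0 \<and> N \<ge> 1 \<and> beta A N > 0 \<and>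
            stationary (K_reg mu A b) x' \<and>
            (let z' = (x' - adjoint cnj A *v (A *v x')) + adjoint cnj A *v b in
               \<forall>i. norm (z' $ i) \<notin> {(beta A N)\<^sup>2 * sqrt mu .. sqrt mu / (beta A N)\<^sup>2}) \<and>
            2 * mu * real (card_nz x') + (norm (A *v x' - b))\<^sup>2 < mu * real N + mu
          \<longrightarrow> unique_global_min (K_fun mu A b) x' \<and> unique_global_min (K_reg mu A b) x')"
  apply (rule conjI)
   apply (intro allI impI)
  subgoal for A b mu N x'
    by (elim conjE, rule main_generic[where cj="\<lambda>t. t"]) (auto simp: Let_def inner_real_def)
  apply (intro allI impI)
  subgoal for A b mu N x'
    by (elim conjE, rule main_generic[where cj=cnj]) (auto simp: Let_def inner_complex_def algebra_simps)
  done

end
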